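(* Let $1\le p<\infty$ and let $\nu$ be a modulus of variation with $\nu(k)\uparrow\infty$ and $\nu(k)/k^{1/p}$ nonincreasing with limit $0$. Let $f$ be a continuous $2\pi$-periodic function. Then $f\in V_p[\nu]$ if and only if the sequence $\{F_n\}$ of Fejér means of $f$ is bounded in $V_p[\nu]$, i.e. $\sup_n\|F_n\|_{p,\nu}<\infty$.
   Context: A modulus of variation is a nondecreasing concave sequence of positive numbers. The Fejér kernel is $K_n(t)=\frac{2}{n+1}\Big(\frac{\sin\frac12(n+1)t}{2\sin\frac12t}\Big)^2$ and the Fejér mean is $F_n(x)=\frac1\pi\int_{-\pi}^{\pi}f(x+t)K_n(t)\,dt$. For a $2\pi$-periodic $g$, $\upsilon_p(n,g)=\sup(\sum_{j=1}^n|g(I_j)|^p)^{1/p}$ over $n$ nonoverlapping subintervals $I_j$ of a period interval $[a,b]=[a,a+2\pi]$, with $g(I)=g(\sup I)-g(\inf I)$; $\|g\|_{p,\nu}=\sup_n\upsilon_p(n,g)/\nu(n)+\sup_{x\in[a,b]}|g(x)|$, and $V_p[\nu]$ is the set of $g$ with $\|g\|_{p,\nu}<\infty$. *)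

theory Defs
  imports "HOL-Analysis.Analysis"
begin

definition modulus_of_variation :: "(nat \<Rightarrow> real) \<Rightarrow> bool" where
  "modulus_of_variation \<nu> \<longleftrightarrow>
     (\<forall>n\<ge>1. 0 < \<nu> n) \<and>
     (\<forall>n\<ge>1. \<nu> n \<le> \<nu> (Suc n)) \<and>
     (\<forall>n\<ge>1. \<nu> (Suc (Suc n)) - \<nu> (Suc n) \<le> \<nu> (Suc n) - \<nu> n)"

definition fejer_kernel :: "nat \<Rightarrow> real \<Rightarrow> real" where
  "fejer_kernel n t = 2 / (real n + 1) * (sin ((real n + 1) * t / 2) / (2 * sin (t / 2)))^2"

definition fejer_mean :: "(real \<Rightarrow> real) \<Rightarrow> nat \<Rightarrow> real \<Rightarrow> real" where
  "fejer_mean f n x = (1 / pi) * integral {-pi..pi} (\<lambda>t. f (x + t) * fejer_kernel n t)"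

definition nonoverlapping_family :: "real \<Rightarrow> nat \<Rightarrow> (nat \<Rightarrow> real) \<Rightarrow> (nat \<Rightarrow> real) \<Rightarrow> bool" where
  "nonoverlapping_family a n s t \<longleftrightarrow>
     (\<forall>j<n. a \<le> s j \<and> s j \<le> t j \<and> t j \<le> a + 2 * pi) \<and>
     (\<forall>i<n. \<forall>j<n. i \<noteq> j \<longrightarrow> t i \<le> s j \<or> t j \<le> s i)"

definition p_variation :: "real \<Rightarrow> real \<Rightarrow> nat \<Rightarrow> (real \<Rightarrow> real) \<Rightarrow> ereal" where
  "p_variation a p n g =
     (SUP st \<in> {(s, t). nonoverlapping_family a n s t}.
        ereal ((\<Sum>j<n. \<bar>g (snd st j) - g (fst st j)\<bar> powr p) powr (1 / p)))"

definition Vp_norm :: "real \<Rightarrow> real \<Rightarrow> (nat \<Rightarrow> real) \<Rightarrow> (real \<Rightarrow> real) \<Rightarrow> ereal" where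
  "Vp_norm a p \<nu> g =
     (SUP n \<in> {1..}. p_variation a p n g / ereal (\<nu> n)) +
     (SUP x \<in> {a..a + 2 * pi}. ereal \<bar>g x\<bar>)"

definition Vp :: "real \<Rightarrow> real \<Rightarrow> (nat \<Rightarrow> real) \<Rightarrow> (real \<Rightarrow> real) set" where
  "Vp a p \<nu> = {g. Vp_norm a p \<nu> g < \<infinity>}"

end

theory Submission
  imports Defs
begin

definition PK :: "nat \<Rightarrow> real \<Rightarrow> real" where
  "PK n t = (\<Sum>k\<le>n. 1/2 + (\<Sum>j=1..k. cos (real j * t))) / (real n + 1)"

lemma dirichlet_id:
  "2 * sin (t/2) * (1/2 + (\<Sum>j=1..k. cos (real j * t))) = sin ((real k + 1/2) * t)"
proof (induction k)
  case 0 then show ?case by simp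
next
  case (Suc k)
  have e: "sin ((real k + 1 + 1/2) * t) - sin ((real k + 1/2) * t) = 2 * sin (t/2) * cos ((real k + 1) * t)"
  proof -
    have a: "(real k + 1 + 1/2) * t = (real k + 1) * t + t/2" by (simp add: algebra_simps)
    have b: "(real k + 1/2) * t = (real k + 1) * t - t/2" by (simp add: algebra_simps)
    show ?thesis unfolding a b by (simp add: sin_add sin_diff)
  qed
  have "2 * sin (t/2) * (1/2 + (\<Sum>j=1..Suc k. cos (real j * t)))
      = 2 * sin (t/2) * (1/2 + (\<Sum>j=1..k. cos (real j * t))) + 2 * sin (t/2) * cos ((real k + 1) * t)"
    by (simp add: algebra_simps)
  also have "\<dots> = sin ((real (Suc k) + 1/2) * t)" using Suc e by (simp add: algebra_simps)
  finally show ?case .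
qed

lemma fejer_sum_id:
  "(\<Sum>k\<le>n. 2 * sin (t/2) * sin ((real k + 1/2) * t)) = 1 - cos ((real n + 1) * t)"
proof (induction n)
  case 0
  have "2 * sin (t/2) * sin (t/2) = 1 - cos t"
    using cos_double_sin[of "t/2"] by (simp add: power2_eq_square)
  then show ?case by simp
next
  case (Suc n)
  have e: "2 * sin (t/2) * sin ((real n + 1 + 1/2) * t) = cos ((real n + 1) * t) - cos ((real n + 2) * t)"
  proof -
    have a: "(real n + 2) * t = (real n + 1 + 1/2) * t + t/2" by (simp add: algebra_simps)
    have b: "(real n + 1) * t = (real n + 1 + 1/2) * t - t/2" by (simp add: algebra_simps)
    show ?thesis unfolding a b by (simp add: cos_add cos_diff)
  qed
  show ?case using Suc e by (simp add: algebra_simps)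
qed

lemma PK_eq_kernel:
  assumes "sin (t/2) \<noteq> 0"
  shows "fejer_kernel n t = PK n t"
proof -
  let ?s = "sin (t/2)"
  have "(\<Sum>k\<le>n. 1/2 + (\<Sum>j=1..k. cos (real j * t))) * (2 * ?s) * (2 * ?s)
      = (\<Sum>k\<le>n. 2 * ?s * sin ((real k + 1/2) * t))"
  proof -
    have "(\<Sum>k\<le>n. 1/2 + (\<Sum>j=1..k. cos (real j * t))) * (2 * ?s)
        = (\<Sum>k\<le>n. 2 * ?s * (1/2 + (\<Sum>j=1..k. cos (real j * t))))"
      by (metis (no_types) mult.commute sum_distrib_left)
    also have "\<dots> = (\<Sum>k\<le>n. sin ((real k + 1/2) * t))" by (simp only: dirichlet_id)
    finally have h: "(\<Sum>k\<le>n. 1/2 + (\<Sum>j=1..k. cos (real j * t))) * (2 * ?s) = (\<Sum>k\<le>n. sin ((real k + 1/2) * t))" .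
    show ?thesis unfolding h by (simp add: sum_distrib_right sum_distrib_left mult.commute)
  qed
  also have "\<dots> = (1 - cos ((real n + 1) * t))" by (rule fejer_sum_id)
  also have "1 - cos ((real n + 1) * t) = 2 * (sin ((real n + 1) * t / 2))^2"
    using cos_double_sin[of "(real n + 1) * t / 2"] by simp
  finally have "(\<Sum>k\<le>n. 1/2 + (\<Sum>j=1..k. cos (real j * t))) = 2 * (sin ((real n + 1) * t / 2) / (2 * ?s))^2"
    using assms by (simp add: field_simps power2_eq_square)
  then show ?thesis unfolding fejer_kernel_def PK_def by simp
qed


lemma continuous_PK: "continuous_on S (PK n)"
  unfolding PK_def by (intro continuous_intros) simp

lemma cos_integral_zero:
  assumes "j \<ge> 1"
  shows "((\<lambda>t. cos (real j * t)) has_integral 0) {-pi..pi}"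
proof -
  have "((\<lambda>t. cos (real j * t)) has_integral (sin (real j * pi) / real j - sin (real j * (-pi)) / real j)) {-pi..pi}"
    apply (rule fundamental_theorem_of_calculus)
     apply simp
    using assms apply (auto intro!: derivative_eq_intros simp: has_real_derivative_iff_has_vector_derivative[symmetric])
    done
  moreover have "sin (real j * pi) = 0" by (simp add: sin_zero_iff_int2)
  ultimately show ?thesis by simp
qed

lemma PK_integral: "(PK n has_integral pi) {-pi..pi}"
proof -
  have D: "((\<lambda>t. 1/2 + (\<Sum>j=1..k. cos (real j * t))) has_integral pi) {-pi..pi}" for k
  proof -
    have "((\<lambda>t. 1/2 + (\<Sum>j=1..k. cos (real j * t))) has_integral (Henstock_Kurzweil_Integration.content {-pi..pi} *\<^sub>R (1/2) + (\<Sum>j=1..k. 0))) {-pi..pi}"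
      by (intro has_integral_add has_integral_const_real has_integral_sum cos_integral_zero) auto
    then show ?thesis by simp
  qed
  have "((\<lambda>t. (\<Sum>k\<le>n. 1/2 + (\<Sum>j=1..k. cos (real j * t)))) has_integral (\<Sum>k\<le>n. pi)) {-pi..pi}"
    by (intro has_integral_sum D) auto
  then have "((\<lambda>t. (\<Sum>k\<le>n. 1/2 + (\<Sum>j=1..k. cos (real j * t))) / (real n + 1)) has_integral (\<Sum>k\<le>n. pi) / (real n + 1)) {-pi..pi}"
    by (rule has_integral_divide)
  moreover have "(\<Sum>k\<le>n. pi) / (real n + 1) = pi" by (simp add: field_simps)
  ultimately show ?thesis unfolding PK_def[abs_def] by simp
qed

lemma sin_half_nonzero:
  assumes "t \<in> {-pi..pi}" "t \<noteq> 0"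
  shows "sin (t/2) \<noteq> 0"
proof
  assume "sin (t/2) = 0"
  moreover have "-pi < t/2" "t/2 < pi" using assms pi_gt_zero by auto
  ultimately have "t/2 = 0" using sin_eq_0_pi by blast
  with assms show False by simp
qed

lemma fejer_kernel_nonneg: "fejer_kernel n t \<ge> 0"
  unfolding fejer_kernel_def by simp

lemma PK_nonneg:
  assumes "t \<in> {-pi..pi}"
  shows "PK n t \<ge> 0"
proof (cases "t = 0")
  case True
  then show ?thesis unfolding PK_def by (auto intro!: divide_nonneg_pos sum_nonneg add_nonneg_nonneg)
next
  case False
  then show ?thesis using PK_eq_kernel[of t n] sin_half_nonzero[OF assms] fejer_kernel_nonneg[of n t] by simp
qed

lemma arith_aux: "(q::real) > 0 \<Longrightarrow> 2 / (real n + 1) * (1 / (4 * q)) = 1 / (2 * (real n + 1) * q)"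
  by (simp add: field_simps)

lemma PK_tail:
  assumes "0 < d" "d \<le> \<bar>t\<bar>" "\<bar>t\<bar> \<le> pi"
  shows "PK n t \<le> 1 / (2 * (real n + 1) * (sin (d/2))^2)"
proof -
  have t0: "t \<noteq> 0" using assms by auto
  have tin: "t \<in> {-pi..pi}" using assms by auto
  have sd: "0 < sin (d/2)" using assms by (intro sin_gt_zero) auto
  have "sin (d/2) \<le> sin (\<bar>t\<bar>/2)" using assms by (intro sin_monotone_2pi_le) auto
  moreover have "sin (\<bar>t\<bar>/2) = \<bar>sin (t/2)\<bar>"
  proof (cases "t \<ge> 0")
    case True then show ?thesis using assms by (simp add: sin_ge_zero)
  next
    case False
    have "sin (-t/2) \<ge> 0" using assms False by (intro sin_ge_zero) auto
    then show ?thesis using False by simp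
  qed
  ultimately have le: "(sin (d/2))^2 \<le> (sin (t/2))^2"
    using sd by (metis abs_le_square_iff abs_of_pos order.trans abs_ge_self)
  have "PK n t = fejer_kernel n t" using PK_eq_kernel[OF sin_half_nonzero[OF tin t0]] by simp
  also have "\<dots> = 2 / (real n + 1) * ((sin ((real n + 1) * t / 2))^2 / (4 * (sin (t/2))^2))"
    unfolding fejer_kernel_def by (simp add: power_divide power_mult_distrib)
  also have "\<dots> \<le> 2 / (real n + 1) * (1 / (4 * (sin (d/2))^2))"
  proof (intro mult_left_mono frac_le)
    show "(sin ((real n + 1) * t / 2))^2 \<le> 1" by (simp add: abs_square_le_1)
  qed (use le sd in auto)
  also have "\<dots> = 1 / (2 * (real n + 1) * (sin (d/2))^2)" using sd by (intro arith_aux) simp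
  finally show ?thesis .
qed

lemma fejer_mean_PK:
  "fejer_mean f n x = (1/pi) * integral {-pi..pi} (\<lambda>t. f (x + t) * PK n t)"
proof -
  have "integral {-pi..pi} (\<lambda>t. f (x + t) * fejer_kernel n t) = integral {-pi..pi} (\<lambda>t. f (x + t) * PK n t)"
    by (rule integral_spike[of "{0}"]) (auto simp: PK_eq_kernel sin_half_nonzero)
  then show ?thesis unfolding fejer_mean_def by simp
qed


lemma PK_integrable_mult:
  assumes "continuous_on {-pi..pi} g"
  shows "(\<lambda>t. g t * PK n t) integrable_on {-pi..pi}"
  by (intro integrable_continuous_interval continuous_intros assms continuous_PK)

lemma fejer_tendsto:
  assumes f: "continuous_on UNIV f"
  shows "(\<lambda>n. fejer_mean f n x) \<longlonglongrightarrow> f x"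
proof -
  define g where "g t = f (x + t) - f x" for t
  have gc: "continuous_on {-pi..pi} g" unfolding g_def
    by (intro continuous_intros continuous_on_compose2[OF f]) auto
  have "bounded (g ` {-pi..pi})" by (intro compact_imp_bounded compact_continuous_image gc) auto
  then obtain M where M: "M > 0" "\<And>t. t \<in> {-pi..pi} \<Longrightarrow> \<bar>g t\<bar> \<le> M"
    unfolding bounded_pos by auto
  have diff: "fejer_mean f n x - f x = (1/pi) * integral {-pi..pi} (\<lambda>t. g t * PK n t)" for n
  proof -
    have i1: "(\<lambda>t. f (x + t) * PK n t) integrable_on {-pi..pi}"
      by (intro PK_integrable_mult continuous_intros continuous_on_compose2[OF f]) auto
    have i2: "((\<lambda>t. f x * PK n t) has_integral (f x * pi)) {-pi..pi}"
      by (intro has_integral_mult_right PK_integral)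
    have "integral {-pi..pi} (\<lambda>t. g t * PK n t) = integral {-pi..pi} (\<lambda>t. f (x + t) * PK n t) - f x * pi"
      unfolding g_def left_diff_distrib
      using integral_diff[OF i1 has_integral_integrable[OF i2]] integral_unique[OF i2] by simp
    then show ?thesis unfolding fejer_mean_PK by (simp add: field_simps)
  qed
  show ?thesis
  proof (rule LIMSEQ_I)
    fix e :: real assume e: "e > 0"
    have "continuous (at x) f" using f by (simp add: continuous_on_eq_continuous_at)
    then have "\<forall>e>0. \<exists>d>0. \<forall>y. dist y x < d \<longrightarrow> dist (f y) (f x) < e"
      unfolding continuous_at_eps_delta .
    then obtain \<delta> where \<delta>: "\<delta> > 0" "\<And>y. dist y x < \<delta> \<Longrightarrow> dist (f y) (f x) < e/2"
      using half_gt_zero[OF e] by blast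
    define d where "d = min \<delta> pi"
    have d: "0 < d" "d \<le> pi" "d \<le> \<delta>" using \<delta> pi_gt_zero unfolding d_def by auto
    have sd: "0 < sin (d/2)" using d by (intro sin_gt_zero) auto
    define s where "s = (sin (d/2))^2"
    have s: "s > 0" using sd unfolding s_def by simp
    obtain N :: nat where N: "real N > 2 * M / (s * e)" using reals_Archimedean2 by blast
    show "\<exists>no. \<forall>n\<ge>no. norm (fejer_mean f n x - f x) < e"
    proof (intro exI allI impI)
      fix n assume n: "n \<ge> N"
      define C where "C = M / (2 * (real n + 1) * s)"
      have pt: "norm (g t * PK n t) \<le> e/2 * PK n t + C" if t: "t \<in> {-pi..pi}" for t
      proof -
        have pk: "PK n t \<ge> 0" using PK_nonneg[OF t] .
        have C0: "C \<ge> 0" unfolding C_def using M s by simp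
        show ?thesis
        proof (cases "\<bar>t\<bar> < d")
          case True
          then have "\<bar>g t\<bar> < e/2" using \<delta>(2)[of "x + t"] d unfolding g_def dist_real_def by auto
          then have "\<bar>g t\<bar> * PK n t \<le> e/2 * PK n t" using pk by (intro mult_right_mono) auto
          then show ?thesis using C0 pk by (simp add: abs_mult)
        next
          case False
          then have "PK n t \<le> 1 / (2 * (real n + 1) * s)" unfolding s_def
            using PK_tail[of d t n] d t by auto
          then have "\<bar>g t\<bar> * PK n t \<le> M * (1 / (2 * (real n + 1) * s))"
            using M(2)[OF t] pk M(1) by (intro mult_mono) auto
          moreover have "0 \<le> e/2 * PK n t" using pk e by simp
          moreover have "norm (g t * PK n t) = \<bar>g t\<bar> * PK n t" using pk by (simp add: abs_mult)
          ultimately show ?thesis unfolding C_def by simp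
        qed
      qed
      have "norm (integral {-pi..pi} (\<lambda>t. g t * PK n t)) \<le> integral {-pi..pi} (\<lambda>t. e/2 * PK n t + C)"
        by (intro integral_norm_bound_integral PK_integrable_mult gc pt
            integrable_add integrable_cmul has_integral_integrable[OF PK_integral] integrable_const_ivl)
          (auto intro: has_integral_integrable[OF PK_integral])
      also have "\<dots> = e/2 * pi + C * (2 * pi)"
      proof -
        have "((\<lambda>t. e/2 * PK n t + C) has_integral (e/2 * pi + Henstock_Kurzweil_Integration.content {-pi..pi} *\<^sub>R C)) {-pi..pi}"
          by (intro has_integral_add has_integral_mult_right PK_integral has_integral_const_real)
        then show ?thesis by (simp add: integral_unique)
      qed
      finally have I: "norm (integral {-pi..pi} (\<lambda>t. g t * PK n t)) \<le> e/2 * pi + C * (2 * pi)" .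
      have "norm (fejer_mean f n x - f x) = (1/pi) * norm (integral {-pi..pi} (\<lambda>t. g t * PK n t))"
        unfolding diff by (simp add: abs_mult)
      also have "\<dots> \<le> (1/pi) * (e/2 * pi + C * (2 * pi))"
        using I by (intro mult_left_mono) auto
      also have "\<dots> = e/2 + 2 * C" by (simp add: field_simps)
      also have "\<dots> = e/2 + M / ((real n + 1) * s)" unfolding C_def using s by (simp add: divide_simps; simp add: algebra_simps)
      also have "\<dots> < e"
      proof -
        have "2 * M / (s * e) < real n + 1" using N n by linarith
        then have "2 * M < (real n + 1) * s * e" using s e by (simp add: field_simps)
        then have "M < e/2 * ((real n + 1) * s)" by (simp add: field_simps)
        moreover have pos: "0 < (real n + 1) * s" using s by simp
        ultimately have "M / ((real n + 1) * s) < e/2" by (simp add: pos_divide_less_eq[OF pos])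
        then show ?thesis by linarith
      qed
      finally show "norm (fejer_mean f n x - f x) < e" .
    qed
  qed
qed

lemma powr_tangent_pos:
  fixes m y p :: real
  assumes p: "1 \<le> p" and m: "m > 0"
  shows "m powr p + p * m powr (p - 1) * (y - m) \<le> \<bar>y\<bar> powr p"
proof (cases "y > 0")
  case True
  have d: "((\<lambda>z. z powr p) has_real_derivative p * m powr (p - 1)) (at m within {0<..})"
    by (rule has_field_derivative_at_within[OF has_real_derivative_powr[OF m]])
  have c: "connected ({0<..} :: real set)" by (simp add: convex_connected)
  have i: "m \<in> interior {0<..}" using m by (simp add: interior_open)
  have "p * m powr (p - 1) * (y - m) \<le> y powr p - m powr p"
    using convex_on_imp_above_tangent[OF powr_convex[OF p] c i _ d] True by simp
  then show ?thesis using True by simp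
next
  case False
  have e: "m powr p = m powr (p - 1) * m"
  proof -
    have "m powr (p - 1) * m powr 1 = m powr (p - 1 + 1)" by (rule powr_add[symmetric])
    then show ?thesis using m by simp
  qed
  have "m + p * (y - m) \<le> 0"
  proof -
    have "(p - 1) * m \<ge> 0" using p m by simp
    moreover have "p * y \<le> 0" using p False by (simp add: mult_nonneg_nonpos)
    ultimately show ?thesis by (simp add: algebra_simps)
  qed
  then have "m powr (p - 1) * (m + p * (y - m)) \<le> 0"
    using m by (simp add: mult_nonneg_nonpos)
  moreover have "m powr p + p * m powr (p - 1) * (y - m) = m powr (p - 1) * (m + p * (y - m))"
    unfolding e by (simp add: algebra_simps)
  moreover have "0 \<le> \<bar>y\<bar> powr p" by simp
  ultimately show ?thesis by linarith
qed

lemma abs_powr_tangent: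
  fixes m y p :: real
  assumes p: "1 \<le> p" and m: "m \<noteq> 0"
  shows "\<bar>m\<bar> powr p + p * sgn m * \<bar>m\<bar> powr (p - 1) * (y - m) \<le> \<bar>y\<bar> powr p"
proof (cases "m > 0")
  case True
  then show ?thesis using powr_tangent_pos[OF p True, of y] by simp
next
  case False
  then have mm: "-m > 0" using m by simp
  have "(-m) powr p + p * (-m) powr (p - 1) * (-y - (-m)) \<le> \<bar>-y\<bar> powr p"
    by (rule powr_tangent_pos[OF p mm])
  moreover have "\<bar>m\<bar> = -m" "sgn m = -1" using False m by auto
  ultimately show ?thesis by (simp add: algebra_simps)
qed

lemma jensen_PK:
  assumes p: "1 \<le> p" and h: "continuous_on {-pi..pi} h"
  shows "\<bar>(1/pi) * integral {-pi..pi} (\<lambda>t. h t * PK n t)\<bar> powr p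
         \<le> (1/pi) * integral {-pi..pi} (\<lambda>t. \<bar>h t\<bar> powr p * PK n t)"
proof -
  define I where "I = integral {-pi..pi} (\<lambda>t. h t * PK n t)"
  define m where "m = (1/pi) * I"
  have hc: "continuous_on {-pi..pi} (\<lambda>t. \<bar>h t\<bar> powr p)"
    using p by (intro continuous_on_powr' continuous_intros h) auto
  have int2: "(\<lambda>t. \<bar>h t\<bar> powr p * PK n t) integrable_on {-pi..pi}"
    by (rule PK_integrable_mult[OF hc])
  have nn: "0 \<le> integral {-pi..pi} (\<lambda>t. \<bar>h t\<bar> powr p * PK n t)"
    by (intro integral_nonneg int2) (auto intro!: mult_nonneg_nonneg PK_nonneg)
  show ?thesis
  proof (cases "m = 0")
    case True
    then show ?thesis using nn unfolding m_def[symmetric] I_def[symmetric] by simp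
  next
    case False
    define c where "c = p * sgn m * \<bar>m\<bar> powr (p - 1)"
    have HI: "((\<lambda>t. h t * PK n t) has_integral I) {-pi..pi}"
      unfolding I_def by (intro integrable_integral PK_integrable_mult h)
    have "((\<lambda>t. (\<bar>m\<bar> powr p + c * (h t - m)) * PK n t) has_integral
            (\<bar>m\<bar> powr p * pi + (c * I - c * m * pi))) {-pi..pi}"
    proof -
      have "((\<lambda>t. \<bar>m\<bar> powr p * PK n t + (c * (h t * PK n t) - c * m * PK n t)) has_integral
            (\<bar>m\<bar> powr p * pi + (c * I - c * m * pi))) {-pi..pi}"
        by (intro has_integral_add has_integral_diff has_integral_mult_right PK_integral HI)
      then show ?thesis by (simp add: algebra_simps)
    qed
    moreover have "\<bar>m\<bar> powr p * pi + (c * I - c * m * pi) = \<bar>m\<bar> powr p * pi"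
      unfolding m_def by simp
    ultimately have HL: "((\<lambda>t. (\<bar>m\<bar> powr p + c * (h t - m)) * PK n t) has_integral (\<bar>m\<bar> powr p * pi)) {-pi..pi}"
      by simp
    have "\<bar>m\<bar> powr p * pi \<le> integral {-pi..pi} (\<lambda>t. \<bar>h t\<bar> powr p * PK n t)"
    proof (rule has_integral_le[OF HL integrable_integral[OF int2]])
      fix t assume t: "t \<in> {-pi..pi}"
      show "(\<bar>m\<bar> powr p + c * (h t - m)) * PK n t \<le> \<bar>h t\<bar> powr p * PK n t"
        using abs_powr_tangent[OF p False, of "h t"] PK_nonneg[OF t]
        unfolding c_def by (intro mult_right_mono) auto
    qed
    then have "\<bar>m\<bar> powr p \<le> (1/pi) * integral {-pi..pi} (\<lambda>t. \<bar>h t\<bar> powr p * PK n t)"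
      by (simp add: field_simps)
    then show ?thesis unfolding m_def I_def .
  qed
qed

definition VB :: "real \<Rightarrow> real \<Rightarrow> (nat \<Rightarrow> real) \<Rightarrow> (real \<Rightarrow> real) \<Rightarrow> real \<Rightarrow> bool" where
  "VB a p \<nu> g M \<longleftrightarrow> (\<forall>k\<ge>1. \<forall>s t. nonoverlapping_family a k s t \<longrightarrow>
      (\<Sum>j<k. \<bar>g (t j) - g (s j)\<bar> powr p) powr (1/p) \<le> M * \<nu> k)"

lemma p_variation_ge:
  assumes "nonoverlapping_family a k s t"
  shows "ereal ((\<Sum>j<k. \<bar>g (t j) - g (s j)\<bar> powr p) powr (1/p)) \<le> p_variation a p k g"
  unfolding p_variation_def
  by (rule SUP_upper2[of "(s, t)"]) (use assms in auto)

lemma trivial_family: "nonoverlapping_family a k (\<lambda>_. a) (\<lambda>_. a)"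
  unfolding nonoverlapping_family_def by auto

lemma p_variation_nonneg: "0 \<le> p_variation a p k g"
  using p_variation_ge[where p=p and g=g, OF trivial_family[of a k]] by (simp add: zero_ereal_def)

lemma norm_le:
  assumes pos: "\<forall>n\<ge>1. 0 < \<nu> n" and vb: "VB a p \<nu> g M"
    and bd: "\<forall>x\<in>{a..a + 2*pi}. \<bar>g x\<bar> \<le> B"
  shows "Vp_norm a p \<nu> g \<le> ereal (M + B)"
proof -
  have "(SUP n \<in> {1..}. p_variation a p n g / ereal (\<nu> n)) \<le> ereal M"
  proof (rule SUP_least)
    fix n :: nat assume n: "n \<in> {1..}"
    have "p_variation a p n g \<le> ereal (M * \<nu> n)"
      unfolding p_variation_def
    proof (rule SUP_least)
      fix st assume "st \<in> {(s, t). nonoverlapping_family a n s t}"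
      then show "ereal ((\<Sum>j<n. \<bar>g (snd st j) - g (fst st j)\<bar> powr p) powr (1 / p)) \<le> ereal (M * \<nu> n)"
        using vb n unfolding VB_def by auto
    qed
    then show "p_variation a p n g / ereal (\<nu> n) \<le> ereal M"
      using pos n by (subst ereal_divide_le_pos) (auto simp: mult.commute)
  qed
  moreover have "(SUP x \<in> {a..a + 2 * pi}. ereal \<bar>g x\<bar>) \<le> ereal B"
    by (rule SUP_least) (use bd in auto)
  ultimately show ?thesis unfolding Vp_norm_def
    by (metis add_mono plus_ereal.simps(1))
qed

lemma norm_ge:
  assumes pos: "\<forall>n\<ge>1. 0 < \<nu> n" and le: "Vp_norm a p \<nu> g \<le> ereal R"
  shows "VB a p \<nu> g R" "\<forall>x\<in>{a..a + 2*pi}. \<bar>g x\<bar> \<le> R"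
proof -
  define S1 where "S1 = (SUP n \<in> {1..}. p_variation a p n g / ereal (\<nu> n))"
  define S2 where "S2 = (SUP x \<in> {a..a + 2 * pi}. ereal \<bar>g x\<bar>)"
  have S1: "0 \<le> S1" unfolding S1_def
    by (rule SUP_upper2[of 1]) (use pos p_variation_nonneg in auto)
  have ain: "a \<in> {a..a + 2*pi}" by simp
  have S2: "0 \<le> S2" unfolding S2_def
    by (rule SUP_upper2[OF ain]) auto
  have sum: "S1 + S2 \<le> ereal R" using le unfolding Vp_norm_def S1_def S2_def .
  have S1R: "S1 \<le> ereal R" using sum S2 by (metis ereal_le_add_self order.trans)
  have S2R: "S2 \<le> ereal R" using sum S1 by (metis ereal_le_add_self2 order.trans)
  show "VB a p \<nu> g R" unfolding VB_def
  proof (intro allI impI)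
    fix k :: nat and s t assume k: "k \<ge> 1" and fam: "nonoverlapping_family a k s t"
    have "p_variation a p k g / ereal (\<nu> k) \<le> S1" unfolding S1_def
      by (rule SUP_upper) (use k in auto)
    then have "p_variation a p k g / ereal (\<nu> k) \<le> ereal R" using S1R by simp
    then have "p_variation a p k g \<le> ereal (\<nu> k) * ereal R"
      using pos k by (subst (asm) ereal_divide_le_pos) auto
    then have A: "p_variation a p k g \<le> ereal (R * \<nu> k)" by (simp add: mult.commute)
    have "ereal ((\<Sum>j<k. \<bar>g (t j) - g (s j)\<bar> powr p) powr (1/p)) \<le> ereal (R * \<nu> k)"
      using order.trans[OF p_variation_ge[where p=p and g=g, OF fam] A] .
    then show "(\<Sum>j<k. \<bar>g (t j) - g (s j)\<bar> powr p) powr (1/p) \<le> R * \<nu> k" by simp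
  qed
  show "\<forall>x\<in>{a..a + 2*pi}. \<bar>g x\<bar> \<le> R"
  proof
    fix x assume x: "x \<in> {a..a + 2*pi}"
    have "ereal \<bar>g x\<bar> \<le> S2" unfolding S2_def by (rule SUP_upper[OF x])
    then have "ereal \<bar>g x\<bar> \<le> ereal R" using S2R by (rule order.trans)
    then show "\<bar>g x\<bar> \<le> R" by simp
  qed
qed

lemma sum_split_add:
  "(\<Sum>j<k + m. F j) = (\<Sum>j<k. F j) + (\<Sum>j<m. F (k + j))" for F :: "nat \<Rightarrow> real"
  by (induction m) (auto simp: ac_simps)

lemma powr_sum_le:
  fixes X Y p :: real
  assumes p: "1 \<le> p"
  shows "\<bar>X + Y\<bar> powr p \<le> 2 powr (p - 1) * (\<bar>X\<bar> powr p + \<bar>Y\<bar> powr p)"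
proof (cases "\<bar>X\<bar> + \<bar>Y\<bar> = 0")
  case True
  then have "X = 0" "Y = 0" by auto
  then show ?thesis by simp
next
  case False
  define m where "m = (\<bar>X\<bar> + \<bar>Y\<bar>) / 2"
  have m: "m > 0" using False unfolding m_def by simp
  have t1: "m powr p + p * m powr (p - 1) * (\<bar>X\<bar> - m) \<le> \<bar>\<bar>X\<bar>\<bar> powr p"
    by (rule powr_tangent_pos[OF p m])
  have t2: "m powr p + p * m powr (p - 1) * (\<bar>Y\<bar> - m) \<le> \<bar>\<bar>Y\<bar>\<bar> powr p"
    by (rule powr_tangent_pos[OF p m])
  have "(\<bar>X\<bar> - m) + (\<bar>Y\<bar> - m) = 0" unfolding m_def by simp
  then have "p * m powr (p - 1) * (\<bar>X\<bar> - m) + p * m powr (p - 1) * (\<bar>Y\<bar> - m) = 0"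
    by (metis distrib_left mult_zero_right)
  then have A: "2 * m powr p \<le> \<bar>X\<bar> powr p + \<bar>Y\<bar> powr p" using t1 t2 by simp
  have "\<bar>X + Y\<bar> powr p \<le> (2 * m) powr p"
    unfolding m_def using p abs_triangle_ineq[of X Y] by (intro powr_mono2) auto
  also have "\<dots> = 2 powr p * m powr p" using m by (simp add: powr_mult)
  also have "2 powr p = 2 powr (p - 1) * 2"
  proof -
    have "2 powr (p - 1) * 2 powr 1 = 2 powr (p - 1 + 1)" by (rule powr_add[symmetric])
    then show ?thesis by simp
  qed
  also have "2 powr (p - 1) * 2 * m powr p = 2 powr (p - 1) * (2 * m powr p)" by simp
  also have "\<dots> \<le> 2 powr (p - 1) * (\<bar>X\<bar> powr p + \<bar>Y\<bar> powr p)"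
    using A by (intro mult_left_mono) auto
  finally show ?thesis .
qed

lemma minmax_sum: "f (min x c) + f (max x c) = f x + (f c :: real)" for x c :: real
proof (cases "x \<le> c")
  case True
  then have "min x c = x" "max x c = c" by auto
  then show ?thesis by simp
next
  case False
  then have "min x c = c" "max x c = x" by auto
  then show ?thesis by simp
qed

lemma split_family:
  fixes f :: "real \<Rightarrow> real"
  assumes p: "1 \<le> p"
    and fam1: "\<forall>j<k. b \<le> s j \<and> s j \<le> t j \<and> t j \<le> b + 2 * pi"
    and fam2: "\<forall>i<k. \<forall>j<k. i \<noteq> j \<longrightarrow> t i \<le> s j \<or> t j \<le> s i"
    and c: "b \<le> c" "c \<le> b + 2 * pi"
    and per1: "\<forall>x. f (x + (a + 2 * pi - c)) = f x"
    and per2: "\<forall>x. f (x + (a - c)) = f x"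
  defines "s' \<equiv> \<lambda>j. if j < k then min (s j) c + (a + 2 * pi - c) else max (s (j - k)) c + (a - c)"
    and "t' \<equiv> \<lambda>j. if j < k then min (t j) c + (a + 2 * pi - c) else max (t (j - k)) c + (a - c)"
  shows "nonoverlapping_family a (k + k) s' t'"
    and "(\<Sum>j<k. \<bar>f (t j) - f (s j)\<bar> powr p) \<le> 2 powr (p - 1) * (\<Sum>j<k + k. \<bar>f (t' j) - f (s' j)\<bar> powr p)"
proof -
  have P1: "\<forall>j<k + k. a \<le> s' j \<and> s' j \<le> t' j \<and> t' j \<le> a + 2 * pi"
  proof (intro allI impI)
    fix j assume j: "j < k + k"
    show "a \<le> s' j \<and> s' j \<le> t' j \<and> t' j \<le> a + 2 * pi"
    proof (cases "j < k")
      case True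
      then show ?thesis using fam1 c unfolding s'_def t'_def by (auto simp: min_def)
    next
      case False
      then have "j - k < k" using j by simp
      then show ?thesis using fam1 c False unfolding s'_def t'_def by (auto simp: max_def)
    qed
  qed
  have P2: "\<forall>i<k + k. \<forall>j<k + k. i \<noteq> j \<longrightarrow> t' i \<le> s' j \<or> t' j \<le> s' i"
  proof (intro allI impI)
    fix i j assume i: "i < k + k" and j: "j < k + k" and ij: "i \<noteq> j"
    show "t' i \<le> s' j \<or> t' j \<le> s' i"
    proof (cases "i < k"; cases "j < k")
      assume "i < k" "j < k"
      then have "t i \<le> s j \<or> t j \<le> s i" using fam2 ij by auto
      then show ?thesis using \<open>i < k\<close> \<open>j < k\<close> unfolding s'_def t'_def by (auto simp: min_def)
    next
      assume a1: "i < k" "\<not> j < k"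
      then have "j - k < k" using j by simp
      then have "t' j \<le> s' i" using a1 fam1[rule_format, of i] fam1[rule_format, of "j - k"] c unfolding s'_def t'_def by (auto simp: min_def max_def)
      then show ?thesis by simp
    next
      assume a1: "\<not> i < k" "j < k"
      then have "i - k < k" using i by simp
      then have "t' i \<le> s' j" using a1 fam1[rule_format, of j] fam1[rule_format, of "i - k"] c unfolding s'_def t'_def by (auto simp: min_def max_def)
      then show ?thesis by simp
    next
      assume a1: "\<not> i < k" "\<not> j < k"
      then have "i - k < k" "j - k < k" "i - k \<noteq> j - k" using i j ij by auto
      then have "t (i - k) \<le> s (j - k) \<or> t (j - k) \<le> s (i - k)" using fam2 by auto
      then show ?thesis using a1 unfolding s'_def t'_def by (auto simp: max_def)
    qed
  qed
  show "nonoverlapping_family a (k + k) s' t'"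
    unfolding nonoverlapping_family_def using P1 P2 by blast
  define X where "X j = f (t' j) - f (s' j)" for j
  define Y where "Y j = f (t' (k + j)) - f (s' (k + j))" for j
  have XY: "f (t j) - f (s j) = X j + Y j" if j: "j < k" for j
  proof -
    have "X j = f (min (t j) c) - f (min (s j) c)" unfolding X_def s'_def t'_def using j per1 by simp
    moreover have "Y j = f (max (t j) c) - f (max (s j) c)" unfolding Y_def s'_def t'_def using j per2 by simp
    ultimately show ?thesis using minmax_sum[of f "t j" c] minmax_sum[of f "s j" c] by simp
  qed
  have "(\<Sum>j<k. \<bar>f (t j) - f (s j)\<bar> powr p) \<le> (\<Sum>j<k. 2 powr (p - 1) * (\<bar>X j\<bar> powr p + \<bar>Y j\<bar> powr p))"
    by (intro sum_mono) (simp add: XY powr_sum_le[OF p])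
  also have "\<dots> = 2 powr (p - 1) * ((\<Sum>j<k. \<bar>X j\<bar> powr p) + (\<Sum>j<k. \<bar>Y j\<bar> powr p))"
    by (simp only: sum.distrib[symmetric] sum_distrib_left)
  also have "(\<Sum>j<k. \<bar>X j\<bar> powr p) + (\<Sum>j<k. \<bar>Y j\<bar> powr p) = (\<Sum>j<k + k. \<bar>f (t' j) - f (s' j)\<bar> powr p)"
    unfolding sum_split_add X_def Y_def ..
  finally show "(\<Sum>j<k. \<bar>f (t j) - f (s j)\<bar> powr p) \<le> 2 powr (p - 1) * (\<Sum>j<k + k. \<bar>f (t' j) - f (s' j)\<bar> powr p)" .
qed

lemma periodic_nat:
  assumes per: "\<forall>x. f (x + 2 * pi) = f x"
  shows "f (x + 2 * pi * real n) = f x"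
proof (induction n)
  case 0 then show ?case by simp
next
  case (Suc n)
  have "f (x + 2 * pi * real (Suc n)) = f ((x + 2 * pi * real n) + 2 * pi)" by (simp add: algebra_simps)
  also have "\<dots> = f (x + 2 * pi * real n)" using per by simp
  finally show ?case using Suc by simp
qed

lemma periodic_reduce:
  assumes per: "\<forall>x. f (x + 2 * pi) = f x"
  shows "\<exists>y\<in>{a..a + 2 * pi}. f x = f y"
proof -
  define m where "m = \<lfloor>(x - a) / (2 * pi)\<rfloor>"
  define y where "y = x - 2 * pi * real_of_int m"
  have "real_of_int m \<le> (x - a) / (2 * pi)" "(x - a) / (2 * pi) < real_of_int m + 1"
    unfolding m_def by linarith+
  then have "2 * pi * real_of_int m \<le> x - a" "x - a < 2 * pi * (real_of_int m + 1)"
    using pi_gt_zero by (simp_all add: field_simps)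
  then have yin: "y \<in> {a..a + 2 * pi}" unfolding y_def by (auto simp: algebra_simps)
  have "f x = f y"
  proof (cases "m \<ge> 0")
    case True
    have "f (y + 2 * pi * real (nat m)) = f y" by (rule periodic_nat[OF per])
    moreover have "y + 2 * pi * real (nat m) = x" using True unfolding y_def by simp
    ultimately show ?thesis by simp
  next
    case False
    have "f (x + 2 * pi * real (nat (-m))) = f x" by (rule periodic_nat[OF per])
    moreover have "x + 2 * pi * real (nat (-m)) = y" using False unfolding y_def by simp
    ultimately show ?thesis by simp
  qed
  then show ?thesis using yin by blast
qed

lemma nu_ratio_mono:
  assumes dec: "\<forall>k\<ge>1. \<nu> (Suc k) / real (Suc k) powr (1 / p) \<le> \<nu> k / real k powr (1 / p)"
    and k: "k \<ge> 1" and km: "k \<le> m"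
  shows "\<nu> m / real m powr (1 / p) \<le> \<nu> k / real k powr (1 / p)"
  using km
proof (induction m rule: dec_induct)
  case base then show ?case by simp
next
  case (step m)
  then have "m \<ge> 1" using k by simp
  then show ?case using dec step.IH by (meson order.trans)
qed

lemma nu_double:
  assumes p: "1 \<le> p" and pos: "\<forall>n\<ge>1. 0 < \<nu> n"
    and dec: "\<forall>k\<ge>1. \<nu> (Suc k) / real (Suc k) powr (1 / p) \<le> \<nu> k / real k powr (1 / p)"
    and k: "k \<ge> 1"
  shows "\<nu> (k + k) \<le> 2 * \<nu> k"
proof -
  have r: "\<nu> (k + k) / real (k + k) powr (1 / p) \<le> \<nu> k / real k powr (1 / p)"
    by (rule nu_ratio_mono[OF dec k]) simp
  have kp: "real k powr (1 / p) > 0" using k by simp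
  have e: "real (k + k) powr (1 / p) = 2 powr (1 / p) * real k powr (1 / p)"
    by (simp add: powr_mult[symmetric])
  have "\<nu> (k + k) \<le> \<nu> k / real k powr (1 / p) * real (k + k) powr (1 / p)"
    using r k by (simp add: divide_le_eq)
  also have "\<dots> = \<nu> k * 2 powr (1 / p)" using kp unfolding e by simp
  also have "\<dots> \<le> \<nu> k * 2"
  proof -
    have "2 powr (1 / p) \<le> 2 powr 1" using p by (intro powr_mono) auto
    then show ?thesis using pos k by (intro mult_left_mono) auto
  qed
  finally show ?thesis by simp
qed

lemma fejer_bound:
  assumes f: "continuous_on UNIV f" and bd: "\<forall>y. \<bar>f y\<bar> \<le> R"
  shows "\<bar>fejer_mean f n x\<bar> \<le> R"
proof -
  have "norm (integral {-pi..pi} (\<lambda>t. f (x + t) * PK n t)) \<le> integral {-pi..pi} (\<lambda>t. R * PK n t)"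
  proof (rule integral_norm_bound_integral)
    show "(\<lambda>t. f (x + t) * PK n t) integrable_on {-pi..pi}"
      by (intro PK_integrable_mult continuous_intros continuous_on_compose2[OF f]) auto
    show "(\<lambda>t. R * PK n t) integrable_on {-pi..pi}"
      by (rule has_integral_integrable[OF has_integral_mult_right[OF PK_integral]])
  next
    fix t assume t: "t \<in> {-pi..pi}"
    show "norm (f (x + t) * PK n t) \<le> R * PK n t"
      using PK_nonneg[OF t] bd by (simp add: abs_mult mult_right_mono)
  qed
  also have "\<dots> = R * pi" using PK_integral by (simp add: integral_unique)
  finally show ?thesis unfolding fejer_mean_PK by (simp add: abs_mult field_simps)
qed

lemma fejer_diff:
  assumes f: "continuous_on UNIV f"
  shows "fejer_mean f n y - fejer_mean f n z = (1/pi) * integral {-pi..pi} (\<lambda>u. (f (y + u) - f (z + u)) * PK n u)"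
proof -
  have i1: "(\<lambda>u. f (y + u) * PK n u) integrable_on {-pi..pi}"
    by (intro PK_integrable_mult continuous_intros continuous_on_compose2[OF f]) auto
  have i2: "(\<lambda>u. f (z + u) * PK n u) integrable_on {-pi..pi}"
    by (intro PK_integrable_mult continuous_intros continuous_on_compose2[OF f]) auto
  show ?thesis unfolding fejer_mean_PK left_diff_distrib integral_diff[OF i1 i2]
    by (simp add: right_diff_distrib)
qed

lemma shifted_sum_bound:
  assumes p: "1 \<le> p" and f: "continuous_on UNIV f" and per: "\<forall>x. f (x + 2 * pi) = f x"
    and vb: "VB a p \<nu> f R" and k: "k \<ge> 1"
    and fam: "nonoverlapping_family a k s t" and u: "u \<in> {-pi..pi}"
  shows "(\<Sum>j<k. \<bar>f (t j + u) - f (s j + u)\<bar> powr p) \<le> 2 powr (p - 1) * (R * \<nu> (k + k)) powr p"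
proof -
  define c where "c = (if u \<ge> 0 then a + 2 * pi else a)"
  define b where "b = a + u"
  have per': "\<forall>x. f (x - 2 * pi) = f x" using per by (metis diff_add_cancel)
  have per1: "\<forall>x. f (x + (a + 2 * pi - c)) = f x" unfolding c_def using per by auto
  have per2: "\<forall>x. f (x + (a - c)) = f x" unfolding c_def using per' by auto
  have c1: "b \<le> c" "c \<le> b + 2 * pi" unfolding c_def b_def using u by auto
  have fam1: "\<forall>j<k. b \<le> s j + u \<and> s j + u \<le> t j + u \<and> t j + u \<le> b + 2 * pi"
    using fam unfolding nonoverlapping_family_def b_def by auto
  have fam2: "\<forall>i<k. \<forall>j<k. i \<noteq> j \<longrightarrow> t i + u \<le> s j + u \<or> t j + u \<le> s i + u"
    using fam unfolding nonoverlapping_family_def by auto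
  note S = split_family[OF p fam1 fam2 c1 per1 per2]
  define s' where "s' = (\<lambda>j. if j < k then min (s j + u) c + (a + 2 * pi - c) else max (s (j - k) + u) c + (a - c))"
  define t' where "t' = (\<lambda>j. if j < k then min (t j + u) c + (a + 2 * pi - c) else max (t (j - k) + u) c + (a - c))"
  have fam': "nonoverlapping_family a (k + k) s' t'" using S(1) unfolding s'_def t'_def .
  have le: "(\<Sum>j<k. \<bar>f (t j + u) - f (s j + u)\<bar> powr p) \<le> 2 powr (p - 1) * (\<Sum>j<k + k. \<bar>f (t' j) - f (s' j)\<bar> powr p)"
    using S(2) unfolding s'_def t'_def .
  define Q where "Q = (\<Sum>j<k + k. \<bar>f (t' j) - f (s' j)\<bar> powr p)"
  have Q0: "Q \<ge> 0" unfolding Q_def by (intro sum_nonneg) auto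
  have "Q powr (1/p) \<le> R * \<nu> (k + k)" using vb fam' k unfolding VB_def Q_def by auto
  then have "(Q powr (1/p)) powr p \<le> (R * \<nu> (k + k)) powr p"
    using p by (intro powr_mono2) auto
  moreover have "(Q powr (1/p)) powr p = Q" using Q0 p by (simp add: powr_powr)
  ultimately have "Q \<le> (R * \<nu> (k + k)) powr p" by simp
  then show ?thesis using le unfolding Q_def[symmetric]
    by (meson order.trans mult_left_mono powr_ge_zero)
qed

lemma fejer_VB:
  assumes p: "1 \<le> p" and f: "continuous_on UNIV f" and per: "\<forall>x. f (x + 2 * pi) = f x"
    and pos: "\<forall>n\<ge>1. 0 < \<nu> n"
    and dec: "\<forall>k\<ge>1. \<nu> (Suc k) / real (Suc k) powr (1 / p) \<le> \<nu> k / real k powr (1 / p)"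
    and vb: "VB a p \<nu> f R" and R: "R \<ge> 0"
  shows "VB a p \<nu> (fejer_mean f n) (4 * R)"
  unfolding VB_def
proof (intro allI impI)
  fix k :: nat and s t assume k: "k \<ge> 1" and fam: "nonoverlapping_family a k s t"
  define W where "W = 2 powr (p - 1) * (R * \<nu> (k + k)) powr p"
  define h where "h j u = f (t j + u) - f (s j + u)" for j u
  have hc: "continuous_on {-pi..pi} (h j)" for j
    unfolding h_def by (intro continuous_intros continuous_on_compose2[OF f]) auto
  have hi: "(\<lambda>u. \<bar>h j u\<bar> powr p * PK n u) integrable_on {-pi..pi}" for j
    using p by (intro PK_integrable_mult continuous_on_powr' continuous_intros hc) auto
  have "(\<Sum>j<k. \<bar>fejer_mean f n (t j) - fejer_mean f n (s j)\<bar> powr p)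
      \<le> (\<Sum>j<k. (1/pi) * integral {-pi..pi} (\<lambda>u. \<bar>h j u\<bar> powr p * PK n u))"
  proof (intro sum_mono)
    fix j
    show "\<bar>fejer_mean f n (t j) - fejer_mean f n (s j)\<bar> powr p \<le> (1/pi) * integral {-pi..pi} (\<lambda>u. \<bar>h j u\<bar> powr p * PK n u)"
      unfolding fejer_diff[OF f] using jensen_PK[OF p hc[of j], of n] unfolding h_def by (simp add: add.commute)
  qed
  also have "\<dots> = (1/pi) * integral {-pi..pi} (\<lambda>u. (\<Sum>j<k. \<bar>h j u\<bar> powr p) * PK n u)"
    by (simp add: sum_distrib_left sum_distrib_right integral_sum hi)
  also have "\<dots> \<le> (1/pi) * integral {-pi..pi} (\<lambda>u. W * PK n u)"
  proof (intro mult_left_mono integral_le)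
    show "(\<lambda>u. (\<Sum>j<k. \<bar>h j u\<bar> powr p) * PK n u) integrable_on {-pi..pi}"
      using hi by (simp add: sum_distrib_right integrable_sum)
    show "(\<lambda>u. W * PK n u) integrable_on {-pi..pi}"
      by (rule has_integral_integrable[OF has_integral_mult_right[OF PK_integral]])
  next
    fix u assume u: "u \<in> {-pi..pi}"
    have "(\<Sum>j<k. \<bar>h j u\<bar> powr p) \<le> W"
      unfolding h_def W_def using shifted_sum_bound[OF p f per vb k fam u] by (simp add: add.commute)
    then show "(\<Sum>j<k. \<bar>h j u\<bar> powr p) * PK n u \<le> W * PK n u"
      using PK_nonneg[OF u] by (intro mult_right_mono) auto
  qed auto
  also have "\<dots> = W" using integral_unique[OF PK_integral[of n]] by simp
  finally have A: "(\<Sum>j<k. \<bar>fejer_mean f n (t j) - fejer_mean f n (s j)\<bar> powr p) \<le> W" .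
  have nu2: "\<nu> (k + k) \<le> 2 * \<nu> k" by (rule nu_double[OF p pos dec k])
  have nupos: "\<nu> (k + k) > 0" using pos k by auto
  have "(\<Sum>j<k. \<bar>fejer_mean f n (t j) - fejer_mean f n (s j)\<bar> powr p) powr (1/p) \<le> W powr (1/p)"
    using A p by (intro powr_mono2) (auto intro: sum_nonneg)
  also have "W powr (1/p) = 2 powr ((p - 1) / p) * (R * \<nu> (k + k))"
  proof -
    have "W powr (1/p) = (2 powr (p - 1)) powr (1/p) * ((R * \<nu> (k + k)) powr p) powr (1/p)"
      unfolding W_def by (simp add: powr_mult)
    also have "\<dots> = 2 powr ((p - 1) / p) * (R * \<nu> (k + k))"
      using p R nupos by (simp add: powr_powr)
    finally show ?thesis .
  qed
  also have "\<dots> \<le> 2 * (R * (2 * \<nu> k))"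
  proof (rule mult_mono)
    show "2 powr ((p - 1) / p) \<le> 2"
    proof -
      have "(p - 1) / p \<le> 1" using p by (simp add: divide_le_eq)
      then have "2 powr ((p - 1) / p) \<le> 2 powr 1" by (intro powr_mono) auto
      then show ?thesis by simp
    qed
    show "R * \<nu> (k + k) \<le> R * (2 * \<nu> k)" using R nu2 by (intro mult_left_mono)
  qed (use R nupos in auto)
  also have "\<dots> = 4 * R * \<nu> k" by simp
  finally show "(\<Sum>j<k. \<bar>fejer_mean f n (t j) - fejer_mean f n (s j)\<bar> powr p) powr (1/p) \<le> 4 * R * \<nu> k" .
qed

theorem proposition3p4:
  fixes p a :: real and \<nu> :: "nat \<Rightarrow> real" and f :: "real \<Rightarrow> real"
  assumes "1 \<le> p"
    and "modulus_of_variation \<nu>"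
    and "filterlim \<nu> at_top sequentially"
    and "\<forall>k\<ge>1. \<nu> (Suc k) / real (Suc k) powr (1 / p) \<le> \<nu> k / real k powr (1 / p)"
    and "(\<lambda>k. \<nu> k / real k powr (1 / p)) \<longlonglongrightarrow> 0"
    and "continuous_on UNIV f"
    and "\<forall>x. f (x + 2 * pi) = f x"
  shows "f \<in> Vp a p \<nu> \<longleftrightarrow> (SUP n. Vp_norm a p \<nu> (fejer_mean f n)) < \<infinity>"
proof -
  note p = assms(1) and dec = assms(4) and f = assms(6) and per = assms(7)
  have pos: "\<forall>n\<ge>1. 0 < \<nu> n" using assms(2) unfolding modulus_of_variation_def by blast
  show ?thesis
  proof
    assume "f \<in> Vp a p \<nu>"
    then have fin: "Vp_norm a p \<nu> f < \<infinity>" unfolding Vp_def by simp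
    have "\<exists>R. Vp_norm a p \<nu> f \<le> ereal R" using fin by (cases "Vp_norm a p \<nu> f") auto
    then obtain R where R: "Vp_norm a p \<nu> f \<le> ereal R" by blast
    have vb: "VB a p \<nu> f R" and bd: "\<forall>x\<in>{a..a + 2*pi}. \<bar>f x\<bar> \<le> R"
      using norm_ge[OF pos R] by auto
    have R0: "R \<ge> 0" using bd[rule_format, of a] by simp
    have bdall: "\<forall>y. \<bar>f y\<bar> \<le> R"
    proof
      fix y
      obtain z where "z \<in> {a..a + 2*pi}" "f y = f z" using periodic_reduce[OF per, of a y] by blast
      then show "\<bar>f y\<bar> \<le> R" using bd by simp
    qed
    have "Vp_norm a p \<nu> (fejer_mean f n) \<le> ereal (4 * R + R)" for n
    proof (rule norm_le[OF pos])
      show "VB a p \<nu> (fejer_mean f n) (4 * R)" by (rule fejer_VB[OF p f per pos dec vb R0])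
      show "\<forall>x\<in>{a..a + 2 * pi}. \<bar>fejer_mean f n x\<bar> \<le> R" using fejer_bound[OF f bdall] by blast
    qed
    then have "(SUP n. Vp_norm a p \<nu> (fejer_mean f n)) \<le> ereal (4 * R + R)"
      by (intro SUP_least) auto
    then show "(SUP n. Vp_norm a p \<nu> (fejer_mean f n)) < \<infinity>"
      using order.strict_trans1 by fastforce
  next
    assume fin: "(SUP n. Vp_norm a p \<nu> (fejer_mean f n)) < \<infinity>"
    have "\<exists>R. (SUP n. Vp_norm a p \<nu> (fejer_mean f n)) \<le> ereal R"
      using fin by (cases "SUP n. Vp_norm a p \<nu> (fejer_mean f n)") auto
    then obtain R where R: "(SUP n. Vp_norm a p \<nu> (fejer_mean f n)) \<le> ereal R" by blast
    have Rn: "Vp_norm a p \<nu> (fejer_mean f n) \<le> ereal R" for n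
      using order.trans[OF SUP_upper[of n UNIV] R] by simp
    have vbn: "VB a p \<nu> (fejer_mean f n) R" for n using norm_ge(1)[OF pos Rn] .
    have bdn: "\<forall>x\<in>{a..a + 2*pi}. \<bar>fejer_mean f n x\<bar> \<le> R" for n using norm_ge(2)[OF pos Rn] .
    have vb: "VB a p \<nu> f R" unfolding VB_def
    proof (intro allI impI)
      fix k :: nat and s t assume k: "k \<ge> 1" and fam: "nonoverlapping_family a k s t"
      have L1: "(\<lambda>n. fejer_mean f n (t j) - fejer_mean f n (s j)) \<longlonglongrightarrow> f (t j) - f (s j)" for j
        by (intro tendsto_diff fejer_tendsto[OF f])
      have L2: "(\<lambda>n. \<Sum>j<k. \<bar>fejer_mean f n (t j) - fejer_mean f n (s j)\<bar> powr p)
                \<longlonglongrightarrow> (\<Sum>j<k. \<bar>f (t j) - f (s j)\<bar> powr p)"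
        by (intro tendsto_sum tendsto_powr' tendsto_rabs L1 tendsto_const) (use p in auto)
      have L3: "(\<lambda>n. (\<Sum>j<k. \<bar>fejer_mean f n (t j) - fejer_mean f n (s j)\<bar> powr p) powr (1/p))
                \<longlonglongrightarrow> (\<Sum>j<k. \<bar>f (t j) - f (s j)\<bar> powr p) powr (1/p)"
        by (intro tendsto_powr' L2 tendsto_const) (use p in \<open>auto intro!: always_eventually sum_nonneg\<close>)
      show "(\<Sum>j<k. \<bar>f (t j) - f (s j)\<bar> powr p) powr (1/p) \<le> R * \<nu> k"
        by (rule LIMSEQ_le_const2[OF L3]) (use vbn k fam in \<open>auto simp: VB_def\<close>)
    qed
    have bd: "\<forall>x\<in>{a..a + 2*pi}. \<bar>f x\<bar> \<le> R"
    proof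
      fix x assume x: "x \<in> {a..a + 2*pi}"
      have "(\<lambda>n. \<bar>fejer_mean f n x\<bar>) \<longlonglongrightarrow> \<bar>f x\<bar>" by (intro tendsto_rabs fejer_tendsto[OF f])
      then show "\<bar>f x\<bar> \<le> R" by (rule LIMSEQ_le_const2) (use bdn x in auto)
    qed
    have "Vp_norm a p \<nu> f \<le> ereal (R + R)" by (rule norm_le[OF pos vb bd])
    then have "Vp_norm a p \<nu> f < \<infinity>" using order.strict_trans1 by fastforce
    then show "f \<in> Vp a p \<nu>" unfolding Vp_def by simp
  qed
qed

end
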